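(* Let $\mathcal F$ be a field and let $p\in\mathbb N$. Let $\mathbf{Mat}_{\mathcal F}$ be the category whose objects are natural numbers, whose arrows $M\colon m\to n$ are $n\times m$ matrices with entries in $\mathcal F$, and whose composition is matrix multiplication. Let $F\colon \mathbf{Mat}_{\mathcal F}\to\mathbf{Mat}_{\mathcal F}$ be the functor with $F(n)=p\cdot n$ on objects and $F(M)=I_p\otimes M$ (Kronecker product with the $p\times p$ identity matrix) on arrows. Then there exist families of matrices $\varphi=(\varphi_n\colon p^2n\to n)_{n}$, $\gamma=(\gamma_n\colon n\to p^2n)_n$ and $\chi=(\chi_n\colon p^2n\to p^2n)_n$ such that $\langle \mathbf{Mat}_{\mathcal F},F,\varphi,\gamma,\chi\rangle$ is a symmetric self-adjunction.
   Context: A symmetric self-adjunction is a quintuple $\langle\mathcal A,F,\varphi,\gamma,\chi\rangle$ where $\mathcal A$ is a category, $F\colon\mathcal A\to\mathcal A$ is a functor, and $\varphi\colon FF\to 1_{\mathcal A}$, $\gamma\colon 1_{\mathcal A}\to FF$, $\chi\colon FF\to FF$ are natural transformations such that for all objects $A$: $\varphi_{FA}\circ F\gamma_A=1_{FA}$ and $F\varphi_A\circ\gamma_{FA}=1_{FA}$ (triangular equations, i.e. $F$ is adjoint to itself with counit $\varphi$ and unit $\gamma$); $\chi_A\circ\chi_A=1_{FFA}$; $\chi_{FA}\circ F\chi_A\circ\chi_{FA}=F\chi_A\circ\chi_{FA}\circ F\chi_A$; $\varphi_A\circ\chi_A=\varphi_A$; $\chi_A\circ\gamma_A=\gamma_A$;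 $\varphi_{FA}\circ F\chi_A=F\varphi_A\circ\chi_{FA}$; $\chi_{FA}\circ F\gamma_A=F\chi_A\circ\gamma_{FA}$. *)

theory Defs
  imports "Jordan_Normal_Form.Matrix"
begin

definition kron :: "'a::times mat \<Rightarrow> 'a mat \<Rightarrow> 'a mat" where
  "kron A B = mat (dim_row A * dim_row B) (dim_col A * dim_col B)
     (\<lambda>(i, j). A $$ (i div dim_row B, j div dim_col B) * B $$ (i mod dim_row B, j mod dim_col B))"

text \<open>A category given by objects Ob, hom-sets Hom x y (arrows x -> y),
  composition cmp g f (= g o f, f first) and identities Idt.\<close>
definition sym_self_adj ::
  "'o set \<Rightarrow> ('o \<Rightarrow> 'o \<Rightarrow> 'm set) \<Rightarrow> ('m \<Rightarrow> 'm \<Rightarrow> 'm) \<Rightarrow> ('o \<Rightarrow> 'm)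
   \<Rightarrow> ('o \<Rightarrow> 'o) \<Rightarrow> ('m \<Rightarrow> 'm)
   \<Rightarrow> ('o \<Rightarrow> 'm) \<Rightarrow> ('o \<Rightarrow> 'm) \<Rightarrow> ('o \<Rightarrow> 'm) \<Rightarrow> bool" where
  "sym_self_adj Ob Hom cmp Idt Fo Fa \<phi> \<gamma> \<chi> \<longleftrightarrow>
    \<comment> \<open>F is a functor\<close>
    (\<forall>x\<in>Ob. Fo x \<in> Ob) \<and>
    (\<forall>x\<in>Ob. \<forall>y\<in>Ob. \<forall>f\<in>Hom x y. Fa f \<in> Hom (Fo x) (Fo y)) \<and>
    (\<forall>x\<in>Ob. Fa (Idt x) = Idt (Fo x)) \<and>
    (\<forall>x\<in>Ob. \<forall>y\<in>Ob. \<forall>z\<in>Ob. \<forall>f\<in>Hom x y. \<forall>g\<in>Hom y z.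
        Fa (cmp g f) = cmp (Fa g) (Fa f)) \<and>
    \<comment> \<open>components of phi : FF -> 1, gamma : 1 -> FF, chi : FF -> FF\<close>
    (\<forall>x\<in>Ob. \<phi> x \<in> Hom (Fo (Fo x)) x) \<and>
    (\<forall>x\<in>Ob. \<gamma> x \<in> Hom x (Fo (Fo x))) \<and>
    (\<forall>x\<in>Ob. \<chi> x \<in> Hom (Fo (Fo x)) (Fo (Fo x))) \<and>
    \<comment> \<open>naturality\<close>
    (\<forall>x\<in>Ob. \<forall>y\<in>Ob. \<forall>f\<in>Hom x y.
        cmp (\<phi> y) (Fa (Fa f)) = cmp f (\<phi> x) \<and>
        cmp (\<gamma> y) f = cmp (Fa (Fa f)) (\<gamma> x) \<and>
        cmp (\<chi> y) (Fa (Fa f)) = cmp (Fa (Fa f)) (\<chi> x)) \<and>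
    \<comment> \<open>the equations\<close>
    (\<forall>x\<in>Ob.
        cmp (\<phi> (Fo x)) (Fa (\<gamma> x)) = Idt (Fo x) \<and>
        cmp (Fa (\<phi> x)) (\<gamma> (Fo x)) = Idt (Fo x) \<and>
        cmp (\<chi> x) (\<chi> x) = Idt (Fo (Fo x)) \<and>
        cmp (\<chi> (Fo x)) (cmp (Fa (\<chi> x)) (\<chi> (Fo x))) =
          cmp (Fa (\<chi> x)) (cmp (\<chi> (Fo x)) (Fa (\<chi> x))) \<and>
        cmp (\<phi> x) (\<chi> x) = \<phi> x \<and>
        cmp (\<chi> x) (\<gamma> x) = \<gamma> x \<and>
        cmp (\<phi> (Fo x)) (Fa (\<chi> x)) = cmp (Fa (\<phi> x)) (\<chi> (Fo x)) \<and>
        cmp (\<chi> (Fo x)) (Fa (\<gamma> x)) = cmp (Fa (\<chi> x)) (\<gamma> (Fo x)))"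

definition Mat_hom :: "nat \<Rightarrow> nat \<Rightarrow> 'a::semiring_1 mat set" where
  "Mat_hom m n = carrier_mat n m"

end

theory Submission
  imports Defs
begin


lemma sum_decomp: "(\<Sum>l<(p::nat)*m. (h l :: 'a::comm_monoid_add)) = (\<Sum>a<p. \<Sum>c<m. h (a*m+c))"
proof (induction p)
  case 0 then show ?case by simp
next
  case (Suc p)
  have "{..<Suc p * m} = {..<p*m} \<union> {p*m..<p*m+m}" by auto
  then have "(\<Sum>l<Suc p*m. h l) = (\<Sum>l<p*m. h l) + (\<Sum>l\<in>{p*m..<p*m+m}. h l)"
    by (simp add: sum.union_disjoint ivl_disj_int)
  also have "(\<Sum>l\<in>{p*m..<p*m+m}. h l) = (\<Sum>c<m. h (p*m+c))"
    using sum.shift_bounds_nat_ivl[of h "0" "p*m" m] by (simp add: lessThan_atLeast0 add.commute)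
  finally show ?case using Suc by simp
qed

lemma dm_div[simp]: "c < (m::nat) \<Longrightarrow> (a*m+c) div m = a" by simp
lemma dm_mod[simp]: "c < (m::nat) \<Longrightarrow> (a*m+c) mod m = c" by simp
lemma dm_lt[simp]: "b < (p::nat) \<Longrightarrow> c < n \<Longrightarrow> b*n+c < p*n"
proof -
  assume "b<p" "c<n"
  then have "b*n+c < b*n+n" by simp
  also have "\<dots> = Suc b * n" by simp
  also have "\<dots> \<le> p*n" using \<open>b<p\<close> by (intro mult_le_mono1) simp
  finally show ?thesis .
qed
lemma dm_eq[simp]: "c < (m::nat) \<Longrightarrow> c' < m \<Longrightarrow> (a*m+c = a'*m+c') = (a=a' \<and> c=c')"
  by (metis dm_div dm_mod)
lemma dm_split: "i < p*(m::nat) \<Longrightarrow> (\<And>a c. a<p \<Longrightarrow> c<m \<Longrightarrow> i = a*m+c \<Longrightarrow> P) \<Longrightarrow> P"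
proof -
  assume i: "i < p*m" and H: "\<And>a c. a<p \<Longrightarrow> c<m \<Longrightarrow> i = a*m+c \<Longrightarrow> P"
  have m: "m > 0" using i by (cases m) auto
  show P
  proof (rule H[of "i div m" "i mod m"])
    show "i div m < p" using i m by (simp add: less_mult_imp_div_less)
    show "i mod m < m" using m by simp
    show "i = i div m * m + i mod m" by simp
  qed
qed

lemma mult_entry: "i < dim_row A \<Longrightarrow> j < dim_col B \<Longrightarrow> dim_col A = dim_row B \<Longrightarrow>
   (A*B) $$ (i,j) = (\<Sum>k<dim_row B. A $$ (i,k) * B $$ (k,j))"
  by (simp add: scalar_prod_def lessThan_atLeast0)

lemma mult_dims: "dim_row (A*B) = dim_row A" "dim_col (A*B) = dim_col B" by simp_all

lemma kron_dims[simp]: "dim_row (kron A B) = dim_row A * dim_row B" "dim_col (kron A B) = dim_col A * dim_col B"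
  by (simp_all add: kron_def)

lemma kron_entry[simp]: "dim_row M = r \<Longrightarrow> dim_col M = s \<Longrightarrow> a < p \<Longrightarrow> a' < p \<Longrightarrow> c < r \<Longrightarrow> c' < s \<Longrightarrow>
  kron (1\<^sub>m p) (M::'a::semiring_1 mat) $$ (a*r+c, a'*s+c') = (if a = a' then M $$ (c,c') else 0)"
  by (simp add: kron_def)

lemma if0_mult[simp]: "(if P then x else 0) * (y::'a::semiring_0) = (if P then x*y else 0)" by simp
lemma mult_if0[simp]: "(y::'a::semiring_0) * (if P then x else 0) = (if P then y*x else 0)" by simp
lemma if0_conj[simp]: "(if P \<and> Q then x else (0::'a::zero)) = (if P then if Q then x else 0 else 0)" by simp
lemma sum_if0_const[simp]: "(\<Sum>x\<in>A. if P then f x else (0::'a::comm_monoid_add)) = (if P then (\<Sum>x\<in>A. f x) else 0)" by simp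

definition Phi :: "nat \<Rightarrow> nat \<Rightarrow> 'a::field mat" where
 "Phi p n = mat n (p*(p*n)) (\<lambda>(i,j). if j div (p*n) = (j mod (p*n)) div n \<and> (j mod (p*n)) mod n = i then 1 else 0)"
definition Gam :: "nat \<Rightarrow> nat \<Rightarrow> 'a::field mat" where
 "Gam p n = mat (p*(p*n)) n (\<lambda>(i,j). if i div (p*n) = (i mod (p*n)) div n \<and> (i mod (p*n)) mod n = j then 1 else 0)"
definition Chi :: "nat \<Rightarrow> nat \<Rightarrow> 'a::field mat" where
 "Chi p n = mat (p*(p*n)) (p*(p*n)) (\<lambda>(i,j). if i div (p*n) = (j mod (p*n)) div n \<and> (i mod (p*n)) div n = j div (p*n)
     \<and> (i mod (p*n)) mod n = (j mod (p*n)) mod n then 1 else 0)"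

lemma Phi_dims[simp]: "dim_row (Phi p n) = n" "dim_col (Phi p n) = p*(p*n)" by (simp_all add: Phi_def)
lemma Gam_dims[simp]: "dim_row (Gam p n) = p*(p*n)" "dim_col (Gam p n) = n" by (simp_all add: Gam_def)
lemma Chi_dims[simp]: "dim_row (Chi p n) = p*(p*n)" "dim_col (Chi p n) = p*(p*n)" by (simp_all add: Chi_def)

lemma Phi_entry[simp]: "a<p \<Longrightarrow> b<p \<Longrightarrow> c<n \<Longrightarrow> i<n \<Longrightarrow>
  Phi p n $$ (i, a*(p*n)+(b*n+c)) = (if a = b \<and> c = i then 1 else 0)"
  by (simp add: Phi_def)
lemma Gam_entry[simp]: "a<p \<Longrightarrow> b<p \<Longrightarrow> c<n \<Longrightarrow> i<n \<Longrightarrow>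
  Gam p n $$ (a*(p*n)+(b*n+c), i) = (if a = b \<and> c = i then 1 else 0)"
  by (simp add: Gam_def)
lemma Chi_entry[simp]: "a<p \<Longrightarrow> b<p \<Longrightarrow> c<n \<Longrightarrow> a'<p \<Longrightarrow> b'<p \<Longrightarrow> c'<n \<Longrightarrow>
  Chi p n $$ (a*(p*n)+(b*n+c), a'*(p*n)+(b'*n+c')) = (if a = b' \<and> b = a' \<and> c = c' then 1 else 0)"
  by (simp add: Chi_def)


lemma F_id: "kron (1\<^sub>m p) (1\<^sub>m x) = (1\<^sub>m (p*x) :: 'a::field mat)"
  apply (rule eq_matI)
  apply (simp_all del: index_mult_mat add: mult_dims)
  apply (elim dm_split)
  apply (simp del: index_mult_mat add: mult_entry sum_decomp mult_dims cong: if_cong)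
  done

lemma F_comp: "dim_row f = y \<Longrightarrow> dim_col f = x \<Longrightarrow> dim_row g = z \<Longrightarrow> dim_col g = y \<Longrightarrow> kron (1\<^sub>m p) (g * f) = kron (1\<^sub>m p) g * kron (1\<^sub>m p) (f::'a::field mat)"
  apply (rule eq_matI)
  apply (simp_all del: index_mult_mat add: mult_dims)
  apply (elim dm_split)
  apply (simp del: index_mult_mat add: mult_entry sum_decomp mult_dims cong: if_cong)
  done

lemma nat_phi: "dim_row f = y \<Longrightarrow> dim_col f = x \<Longrightarrow> Phi p y * kron (1\<^sub>m p) (kron (1\<^sub>m p) f) = f * (Phi p x :: 'a::field mat)"
  apply (rule eq_matI)
  apply (simp_all del: index_mult_mat add: mult_dims)
  apply (elim dm_split)
  apply (simp del: index_mult_mat add: mult_entry sum_decomp mult_dims cong: if_cong)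
  done

lemma nat_gam: "dim_row f = y \<Longrightarrow> dim_col f = x \<Longrightarrow> Gam p y * f = kron (1\<^sub>m p) (kron (1\<^sub>m p) f) * (Gam p x :: 'a::field mat)"
  apply (rule eq_matI)
  apply (simp_all del: index_mult_mat add: mult_dims)
  apply (elim dm_split)
  apply (simp del: index_mult_mat add: mult_entry sum_decomp mult_dims cong: if_cong)
  done

lemma nat_chi: "dim_row f = y \<Longrightarrow> dim_col f = x \<Longrightarrow> Chi p y * kron (1\<^sub>m p) (kron (1\<^sub>m p) f) = kron (1\<^sub>m p) (kron (1\<^sub>m p) f) * (Chi p x :: 'a::field mat)"
  apply (rule eq_matI)
  apply (simp_all del: index_mult_mat add: mult_dims)
  apply (elim dm_split)
  apply (simp del: index_mult_mat add: mult_entry sum_decomp mult_dims cong: if_cong)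
  done

lemma tri1: "Phi p (p*x) * kron (1\<^sub>m p) (Gam p x) = (1\<^sub>m (p*x) :: 'a::field mat)"
  apply (rule eq_matI)
  apply (simp_all del: index_mult_mat add: mult_dims)
  apply (elim dm_split)
  apply (simp del: index_mult_mat add: mult_entry sum_decomp mult_dims cong: if_cong)
  done

lemma tri2: "kron (1\<^sub>m p) (Phi p x) * Gam p (p*x) = (1\<^sub>m (p*x) :: 'a::field mat)"
  apply (rule eq_matI)
  apply (simp_all del: index_mult_mat add: mult_dims)
  apply (elim dm_split)
  apply (simp del: index_mult_mat add: mult_entry sum_decomp mult_dims cong: if_cong)
  done

lemma chi_inv: "Chi p x * Chi p x = (1\<^sub>m (p*(p*x)) :: 'a::field mat)"
  apply (rule eq_matI)
  apply (simp_all del: index_mult_mat add: mult_dims)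
  apply (elim dm_split)
  apply (simp del: index_mult_mat add: mult_entry sum_decomp mult_dims cong: if_cong)
  done

lemma phi_chi: "Phi p x * Chi p x = (Phi p x :: 'a::field mat)"
  apply (rule eq_matI)
  apply (simp_all del: index_mult_mat add: mult_dims)
  apply (elim dm_split)
  apply (simp del: index_mult_mat add: mult_entry sum_decomp mult_dims cong: if_cong)
  done

lemma chi_gam: "Chi p x * Gam p x = (Gam p x :: 'a::field mat)"
  apply (rule eq_matI)
  apply (simp_all del: index_mult_mat add: mult_dims)
  apply (elim dm_split)
  apply (simp del: index_mult_mat add: mult_entry sum_decomp mult_dims cong: if_cong)
  done

lemma e7: "Phi p (p*x) * kron (1\<^sub>m p) (Chi p x) = kron (1\<^sub>m p) (Phi p x) * (Chi p (p*x) :: 'a::field mat)"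
  apply (rule eq_matI)
  apply (simp_all del: index_mult_mat add: mult_dims)
  apply (elim dm_split)
  apply (simp del: index_mult_mat add: mult_entry sum_decomp mult_dims cong: if_cong)
  done

lemma e8: "Chi p (p*x) * kron (1\<^sub>m p) (Gam p x) = kron (1\<^sub>m p) (Chi p x) * (Gam p (p*x) :: 'a::field mat)"
  apply (rule eq_matI)
  apply (simp_all del: index_mult_mat add: mult_dims)
  apply (elim dm_split)
  apply (simp del: index_mult_mat add: mult_entry sum_decomp mult_dims cong: if_cong)
  done

lemma yb: "Chi p (p*x) * (kron (1\<^sub>m p) (Chi p x) * Chi p (p*x)) = kron (1\<^sub>m p) (Chi p x) * (Chi p (p*x) * kron (1\<^sub>m p) (Chi p x) :: 'a::field mat)"
  apply (rule eq_matI)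
  apply (simp_all del: index_mult_mat add: mult_dims)
  apply (elim dm_split)
  apply (simp del: index_mult_mat add: mult_entry sum_decomp mult_dims cong: if_cong)
  done


lemma Phi_carrier: "Phi p x \<in> carrier_mat x (p*(p*x))" by (rule carrier_matI) simp_all
lemma Gam_carrier: "Gam p x \<in> carrier_mat (p*(p*x)) x" by (rule carrier_matI) simp_all
lemma Chi_carrier: "Chi p x \<in> carrier_mat (p*(p*x)) (p*(p*x))" by (rule carrier_matI) simp_all

lemma cmE: "A \<in> carrier_mat r c \<Longrightarrow> (dim_row A = r \<Longrightarrow> dim_col A = c \<Longrightarrow> P) \<Longrightarrow> P"
  unfolding carrier_mat_def by simp

theorem mainTheorem1:
  fixes p :: nat
  shows "\<exists>(\<phi> :: nat \<Rightarrow> 'a::field mat) \<gamma> \<chi>.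
    sym_self_adj (UNIV :: nat set) Mat_hom (\<lambda>g f. g * f) (\<lambda>n. 1\<^sub>m n)
      (\<lambda>n. p * n) (\<lambda>M. kron (1\<^sub>m p) M) \<phi> \<gamma> \<chi>"
  apply (rule exI[of _ "Phi p"], rule exI[of _ "Gam p"], rule exI[of _ "Chi p"])
  unfolding sym_self_adj_def Mat_hom_def
  apply (intro conjI ballI)
  apply simp
  apply (erule cmE, rule carrier_matI, simp, simp)
  apply (rule F_id)
  apply (erule cmE, erule cmE, rule F_comp; assumption)
  apply (rule Phi_carrier)
  apply (rule Gam_carrier)
  apply (rule Chi_carrier)
  apply (erule cmE, erule nat_phi, assumption)
  apply (erule cmE, erule nat_gam, assumption)
  apply (erule cmE, erule nat_chi, assumption)
  apply (rule tri1)
  apply (rule tri2)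
  apply (rule chi_inv)
  apply (rule yb)
  apply (rule phi_chi)
  apply (rule chi_gam)
  apply (rule e7)
  apply (rule e8)
  done
end
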